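(* For any uncountable analytic set $A\subseteq L(E)$, there are a nonempty perfect set $P\subseteq A$ and an infinite-dimensional subspace $V$ of $E$ such that either (i) for all $T\in P$, $V\subseteq\ker(T)$, or (ii) for all $T\in P$, $T\restriction V$ is injective.
   Context: $F$ is a countable (possibly finite) field and $E$ is a countably infinite-dimensional $F$-vector space (with a fixed basis), regarded as a discrete set. $L(E)$ is the set of all $F$-linear maps $E\to E$ with the topology inherited as a subspace of the product space $E^E$; it is an uncountable Polish space. *)

theory Defs
  imports "HOL-Analysis.Analysis"
begin

definition pointwise_discrete_top :: "('a \<Rightarrow> 'b) topology" where
  "pointwise_discrete_top = product_topology (\<lambda>_. discrete_topology UNIV) UNIV"

definition baire_space :: "(nat \<Rightarrow> nat) topology" where
  "baire_space = pointwise_discrete_top"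

definition analytic_in :: "'a topology \<Rightarrow> 'a set \<Rightarrow> bool" where
  "analytic_in X A \<longleftrightarrow> A = {} \<or> (\<exists>f. continuous_map baire_space X f \<and> f ` UNIV = A)"

definition perfect_in :: "'a topology \<Rightarrow> 'a set \<Rightarrow> bool" where
  "perfect_in X P \<longleftrightarrow> closedin X P \<and> P \<subseteq> X derived_set_of P"

definition linmaps_top :: "('f::field \<Rightarrow> 'e::ab_group_add \<Rightarrow> 'e) \<Rightarrow> ('e \<Rightarrow> 'e) topology" where
  "linmaps_top sc = subtopology pointwise_discrete_top {T. Vector_Spaces.linear sc sc T}"

end

theory Submission
  imports Defs
begin


definition cyl :: "(nat \<Rightarrow> 'a) \<Rightarrow> nat \<Rightarrow> (nat \<Rightarrow> 'a) set" where
  "cyl s k = {t. \<forall>i<k. t i = s i}"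

lemma cyl_open: "openin (pointwise_discrete_top :: (nat \<Rightarrow> 'a) topology) (cyl s k)"
proof -
  have "cyl s k = (\<Pi>\<^sub>E i\<in>UNIV. (if i < k then {s i} else UNIV))"
    by (auto simp: cyl_def PiE_def Pi_def split: if_splits)
  moreover have "finite {i. (if i < k then {s i} else UNIV) \<noteq> topspace (discrete_topology (UNIV::'a set))}"
    by (rule finite_subset[of _ "{..<k}"]) auto
  moreover have "openin (product_topology (\<lambda>_. discrete_topology (UNIV::'a set)) UNIV) (\<Pi>\<^sub>E i\<in>UNIV. (if i < k then {s i} else UNIV))"
    by (rule product_topology_basis) (use calculation(2) in auto)
  ultimately show ?thesis unfolding pointwise_discrete_top_def by simp
qed

lemma open_contains_cyl:
  assumes "openin (pointwise_discrete_top :: (nat \<Rightarrow> 'a) topology) W" "s \<in> W"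
  shows "\<exists>k. cyl s k \<subseteq> W"
proof -
  obtain X where X: "s \<in> (\<Pi>\<^sub>E i\<in>UNIV. X i)" "finite {i. X i \<noteq> topspace (discrete_topology (UNIV::'a set))}"
    "(\<Pi>\<^sub>E i\<in>UNIV. X i) \<subseteq> W"
    using product_topology_open_contains_basis[OF assms[unfolded pointwise_discrete_top_def]] by blast
  define k where "k = Suc (Max (insert 0 {i. X i \<noteq> UNIV}))"
  have "cyl s k \<subseteq> (\<Pi>\<^sub>E i\<in>UNIV. X i)"
  proof
    fix t assume t: "t \<in> cyl s k"
    have "t i \<in> X i" for i
    proof (cases "X i = UNIV")
      case False
      then have "i \<le> Max (insert 0 {i. X i \<noteq> UNIV})" using X(2) by (intro Max_ge) auto
      then have "i < k" by (simp add: k_def)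
      then show ?thesis using t X(1) by (auto simp: cyl_def)
    qed auto
    then show "t \<in> (\<Pi>\<^sub>E i\<in>UNIV. X i)" by auto
  qed
  then show ?thesis using X(3) by blast
qed

lemma cont_loc_const:
  assumes "continuous_map (pointwise_discrete_top :: (nat \<Rightarrow> 'a) topology) (pointwise_discrete_top :: ('b \<Rightarrow> 'c) topology) f"
  shows "\<exists>k. \<forall>t\<in>cyl s k. f t x = f s x"
proof -
  have c: "continuous_map (pointwise_discrete_top :: (nat \<Rightarrow> 'a) topology) (discrete_topology UNIV) (\<lambda>t. f t x)"
    using continuous_map_compose[OF assms[unfolded pointwise_discrete_top_def] continuous_map_product_projection[of x UNIV "\<lambda>_. discrete_topology (UNIV::'c set)"]]
    by (simp add: pointwise_discrete_top_def o_def)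
  have "openin (pointwise_discrete_top :: (nat \<Rightarrow> 'a) topology) {t. f t x = f s x}"
    using openin_continuous_map_preimage[OF c, of "{f s x}"]
    by (simp add: pointwise_discrete_top_def)
  then obtain k where "cyl s k \<subseteq> {t. f t x = f s x}" using open_contains_cyl by blast
  then show ?thesis by auto
qed

lemma topspace_pdt[simp]: "topspace (product_topology (\<lambda>_. discrete_topology (UNIV::'c set)) (UNIV::'b set)) = UNIV"
  by auto

lemma loc_const_cont:
  assumes "\<And>s x. \<exists>k. \<forall>t\<in>cyl s k. f t x = f s x"
  shows "continuous_map (pointwise_discrete_top :: (nat \<Rightarrow> 'a) topology) (pointwise_discrete_top :: ('b \<Rightarrow> 'c) topology) f"
  unfolding pointwise_discrete_top_def continuous_map_componentwise_UNIV
proof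
  fix x
  have "openin (product_topology (\<lambda>_. discrete_topology (UNIV::'a set)) UNIV) {t. f t x \<in> U}" for U
  proof (subst openin_subopen, intro ballI)
    fix s assume s: "s \<in> {t. f t x \<in> U}"
    obtain k where k: "\<forall>t\<in>cyl s k. f t x = f s x" using assms by blast
    have "openin (product_topology (\<lambda>_. discrete_topology (UNIV::'a set)) UNIV) (cyl s k)"
      using cyl_open[of s k] unfolding pointwise_discrete_top_def .
    moreover have "s \<in> cyl s k" by (simp add: cyl_def)
    moreover have "cyl s k \<subseteq> {t. f t x \<in> U}" using k s by auto
    ultimately show "\<exists>T. openin (product_topology (\<lambda>_. discrete_topology UNIV) UNIV) T \<and> s \<in> T \<and> T \<subseteq> {t. f t x \<in> U}"
      by blast
  qed
  then show "continuous_map (product_topology (\<lambda>_. discrete_topology UNIV) UNIV) (discrete_topology UNIV) (\<lambda>t. f t x)"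
    unfolding continuous_map_def by simp
qed

lemma cantor_compact: "compact_space (pointwise_discrete_top :: (nat \<Rightarrow> bool) topology)"
  unfolding pointwise_discrete_top_def
  by (simp add: compact_space_product_topology compact_space_discrete_topology)

lemma hausdorff_pdt: "Hausdorff_space (pointwise_discrete_top :: ('b \<Rightarrow> 'c) topology)"
  unfolding pointwise_discrete_top_def
  by (simp add: Hausdorff_space_product_topology)

lemma perfect_from_cantor:
  fixes f :: "(nat \<Rightarrow> bool) \<Rightarrow> ('e::ab_group_add \<Rightarrow> 'e)" and sc :: "'a::field \<Rightarrow> 'e \<Rightarrow> 'e"
  assumes lin: "\<And>b. Vector_Spaces.linear sc sc (f b)"
   and lc: "\<And>b x. \<exists>k. \<forall>b'\<in>cyl b k. f b' x = f b x"
   and sep: "\<And>b n. f (b(n := \<not> b n)) \<noteq> f b"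
  shows "perfect_in (linmaps_top sc) (range f)"
proof -
  have c0: "continuous_map (pointwise_discrete_top :: (nat \<Rightarrow> bool) topology) (pointwise_discrete_top :: ('e \<Rightarrow> 'e) topology) f"
    by (rule loc_const_cont) (use lc in blast)
  have c: "continuous_map (pointwise_discrete_top :: (nat \<Rightarrow> bool) topology) (linmaps_top sc) f"
    unfolding linmaps_top_def continuous_map_in_subtopology using c0 lin by auto
  have tsp: "topspace (pointwise_discrete_top :: (nat \<Rightarrow> bool) topology) = UNIV"
    by (simp add: pointwise_discrete_top_def)
  have "compactin (linmaps_top sc) (f ` UNIV)"
    using image_compactin[OF cantor_compact[unfolded compact_space_def] c] tsp by simp
  moreover have "Hausdorff_space (linmaps_top sc)"
    unfolding linmaps_top_def by (intro Hausdorff_space_subtopology hausdorff_pdt)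
  ultimately have cl: "closedin (linmaps_top sc) (range f)"
    using compactin_imp_closedin by blast
  have "range f \<subseteq> linmaps_top sc derived_set_of range f"
  proof
    fix T assume "T \<in> range f"
    then obtain b where b: "T = f b" by auto
    have top: "T \<in> topspace (linmaps_top sc)"
      using lin b by (simp add: linmaps_top_def pointwise_discrete_top_def)
    show "T \<in> linmaps_top sc derived_set_of range f"
      unfolding in_derived_set_of
    proof (intro conjI allI impI top)
      fix W assume W: "T \<in> W \<and> openin (linmaps_top sc) W"
      have "openin (pointwise_discrete_top :: (nat \<Rightarrow> bool) topology) {x \<in> topspace pointwise_discrete_top. f x \<in> W}"
        using openin_continuous_map_preimage[OF c] W by blast
      then have op: "openin (pointwise_discrete_top :: (nat \<Rightarrow> bool) topology) {x. f x \<in> W}"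
        using tsp by simp
      obtain k where "cyl b k \<subseteq> {x. f x \<in> W}"
        using open_contains_cyl[OF op] W b by blast
      moreover have "b(k := \<not> b k) \<in> cyl b k" by (simp add: cyl_def)
      ultimately have "f (b(k := \<not> b k)) \<in> W" by blast
      then show "\<exists>y. y \<noteq> T \<and> y \<in> range f \<and> y \<in> W"
        using sep[of b k] b by blast
    qed
  qed
  with cl show ?thesis unfolding perfect_in_def by blast
qed


context vector_space begin

lemma span_finite_sub:
  assumes "x \<in> span B" obtains t where "finite t" "t \<subseteq> B" "x \<in> span t"
proof -
  from assms obtain t r where tr: "x = (\<Sum>a\<in>t. r a *s a)" "finite t" "t \<subseteq> B"
    unfolding span_explicit by blast
  have "(\<Sum>a\<in>t. r a *s a) \<in> span t"
    by (rule span_sum, rule span_scale, rule span_base)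
  then show ?thesis using that tr by blast
qed

lemma span_disjoint_indep:
  assumes ind: "independent (A \<union> B)" and disj: "A \<inter> B = {}" and xA: "x \<in> span A" and xB: "x \<in> span B"
  shows "x = 0"
proof -
  obtain B0 where B0: "finite B0" "B0 \<subseteq> B" "x \<in> span B0" using span_finite_sub[OF xB] by blast
  have "B0 \<subseteq> B \<Longrightarrow> x \<in> span B0 \<Longrightarrow> x = 0" using B0(1)
  proof (induction B0 rule: finite_induct)
    case empty then show ?case by simp
  next
    case (insert b B1)
    show ?case
    proof (cases "x \<in> span B1")
      case True then show ?thesis using insert by blast
    next
      case False
      have b: "b \<in> span (insert x B1)" using in_span_insert[OF insert.prems(2) False] .
      have "insert x B1 \<subseteq> span (A \<union> B1)"
        using xA span_mono[of A "A \<union> B1"] span_superset[of "A \<union> B1"] by auto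
      then have "span (insert x B1) \<subseteq> span (A \<union> B1)"
        by (rule span_minimal) simp
      moreover have "A \<union> B1 \<subseteq> (A \<union> B) - {b}"
        using insert.hyps(2) insert.prems(1) disj by auto
      ultimately have "b \<in> span ((A \<union> B) - {b})" using b span_mono by blast
      moreover have "b \<in> A \<union> B" using insert.prems(1) by auto
      ultimately have "dependent (A \<union> B)" unfolding dependent_def by blast
      then show ?thesis using ind by blast
    qed
  qed
  then show ?thesis using B0 by blast
qed

lemma kernel_step:
  assumes W: "subspace W" and B: "B \<subseteq> W" "independent B" "infinite B"
   and lin: "Vector_Spaces.linear scale scale T" and G: "finite G" "range T \<subseteq> span G"
  shows "\<exists>B'. B' \<subseteq> W \<inter> {v. T v = 0} \<and> independent B' \<and> infinite B'"
proof -
  interpret L: Vector_Spaces.linear scale scale T by (rule lin)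
  define K where "K = W \<inter> {v. T v = 0}"
  obtain C where C: "C \<subseteq> K" "independent C" "K \<subseteq> span C"
    using maximal_independent_subset by blast
  show ?thesis
  proof (cases "finite C")
    case False then show ?thesis using C K_def by blast
  next
    case fC: True
    obtain X where X: "X \<subseteq> B" "finite X" "card X = card C + card G + 1"
      using infinite_arbitrarily_large[OF B(3)] by blast
    have iX: "independent X" using independent_mono[OF B(2) X(1)] .
    obtain D where D: "C \<subseteq> D" "D \<subseteq> C \<union> X" "independent D" "C \<union> X \<subseteq> span D"
      using maximal_independent_subset_extend[of C "C \<union> X"] C(2) by blast
    have fD: "finite D" using D(2) fC X(2) finite_subset by blast
    have cXD: "card X \<le> card D" using independent_span_bound[OF fD iX] D(4) by auto
    define X' where "X' = D - C"
    have DCX: "D = C \<union> X'" "C \<inter> X' = {}" using D(1) X'_def by auto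
    have fX': "finite X'" using fD X'_def by simp
    have cD: "card D \<le> card C + card X'" using DCX card_Un_le by metis
    have X'W: "span X' \<subseteq> W"
    proof (rule span_minimal[OF _ W])
      show "X' \<subseteq> W" using D(2) X(1) B(1) X'_def by auto
    qed
    have iX': "independent X'" using independent_mono[OF D(3)] X'_def by auto
    have inj: "inj_on T (span X')"
    proof (subst L.inj_on_iff_eq_0[OF subspace_span], intro ballI impI)
      fix x assume x: "x \<in> span X'" "T x = 0"
      then have "x \<in> K" using X'W K_def by auto
      then have "x \<in> span C" using C(3) by auto
      then show "x = 0" using span_disjoint_indep[of C X' x] D(3) DCX x(1) by auto
    qed
    have "independent (T ` X')" using L.independent_injective_image[OF iX' inj] .
    moreover have "T ` X' \<subseteq> span G" using G(2) by auto
    ultimately have "card (T ` X') \<le> card G" using independent_span_bound[OF G(1)] by blast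
    moreover have "card (T ` X') = card X'"
      using card_image inj_on_subset[OF inj span_superset] by blast
    ultimately show ?thesis using cXD cD X(3) by linarith
  qed
qed

lemma common_kernel:
  assumes fI: "finite I"
    and lin: "\<And>i. i \<in> I \<Longrightarrow> Vector_Spaces.linear scale scale (T i)"
    and fr: "\<And>i. i \<in> I \<Longrightarrow> \<exists>G. finite G \<and> range (T i) \<subseteq> span G"
    and B0: "independent B0" "infinite B0"
  shows "\<exists>B. B \<subseteq> {v. \<forall>i\<in>I. T i v = 0} \<and> independent B \<and> infinite B"
  using fI lin fr
proof (induction I rule: finite_induct)
  case empty show ?case by (rule exI[of _ B0]) (use B0 in simp)
next
  case (insert j I)
  have l: "\<And>i. i \<in> I \<Longrightarrow> Vector_Spaces.linear scale scale (T i)" using insert.prems(1) by simp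
  have f: "\<And>i. i \<in> I \<Longrightarrow> \<exists>G. finite G \<and> range (T i) \<subseteq> span G" using insert.prems(2) by simp
  have ex: "\<exists>B. B \<subseteq> {v. \<forall>i\<in>I. T i v = 0} \<and> independent B \<and> infinite B"
    by (rule insert.IH) (use l f in auto)
  obtain B where B: "B \<subseteq> {v. \<forall>i\<in>I. T i v = 0}" "independent B" "infinite B"
    using ex by (elim exE conjE) (rule that)
  have sub: "subspace {v. \<forall>i\<in>I. T i v = 0}"
  proof (rule subspaceI)
    show "0 \<in> {v. \<forall>i\<in>I. T i v = 0}"
    proof (clarify)
      fix i assume "i \<in> I"
      then interpret L: Vector_Spaces.linear scale scale "T i" using insert.prems(1) by blast
      show "T i 0 = 0" by (rule L.zero)
    qed
  next
    fix x y assume "x \<in> {v. \<forall>i\<in>I. T i v = 0}" "y \<in> {v. \<forall>i\<in>I. T i v = 0}"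
    then show "x + y \<in> {v. \<forall>i\<in>I. T i v = 0}"
    proof (clarify)
      fix i assume a: "i \<in> I" "\<forall>i\<in>I. T i x = 0" "\<forall>i\<in>I. T i y = 0"
      interpret L: Vector_Spaces.linear scale scale "T i" using insert.prems(1) \<open>i \<in> I\<close> by blast
      show "T i (x + y) = 0" using a by (simp add: L.add)
    qed
  next
    fix c x assume "x \<in> {v. \<forall>i\<in>I. T i v = 0}"
    then show "c *s x \<in> {v. \<forall>i\<in>I. T i v = 0}"
    proof (clarify)
      fix i assume a: "i \<in> I" "\<forall>i\<in>I. T i x = 0"
      interpret L: Vector_Spaces.linear scale scale "T i" using insert.prems(1) \<open>i \<in> I\<close> by blast
      show "T i (c *s x) = 0" using a by (simp add: L.scale)
    qed
  qed
  obtain G where G: "finite G" "range (T j) \<subseteq> span G" using insert.prems(2) by blast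
  have lj: "Vector_Spaces.linear scale scale (T j)" using insert.prems(1) by simp
  obtain B' where B': "B' \<subseteq> {v. \<forall>i\<in>I. T i v = 0} \<inter> {v. T j v = 0}" "independent B'" "infinite B'"
    using kernel_step[OF sub B(1) B(2) B(3) lj G] by (elim exE conjE) (rule that)
  have "B' \<subseteq> {v. \<forall>i\<in>insert j I. T i v = 0}" using B'(1) by auto
  then show ?case using B'(2,3) by (intro exI[of _ B']) simp
qed

lemma common_kernel_vec:
  assumes fI: "finite I"
    and lin: "\<And>i. i \<in> I \<Longrightarrow> Vector_Spaces.linear scale scale (T i)"
    and fr: "\<And>i. i \<in> I \<Longrightarrow> \<exists>G. finite G \<and> range (T i) \<subseteq> span G"
    and B0: "independent B0" "infinite B0"
    and fF: "finite F"
  shows "\<exists>v. v \<notin> span F \<and> (\<forall>i\<in>I. T i v = 0)"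
proof -
  have ck: "\<exists>B. B \<subseteq> {v. \<forall>i\<in>I. T i v = 0} \<and> independent B \<and> infinite B"
    by (rule common_kernel[OF fI lin fr B0])
  from ck obtain B where B: "B \<subseteq> {v. \<forall>i\<in>I. T i v = 0}" "independent B" "infinite B"
    by (elim exE conjE) (rule that)
  have "\<not> B \<subseteq> span F"
  proof
    assume "B \<subseteq> span F"
    then have "finite B" using independent_span_bound[OF fF B(2)] by simp
    then show False using B(3) by simp
  qed
  then obtain v where v: "v \<in> B" "v \<notin> span F" by auto
  have "\<forall>i\<in>I. T i v = 0" using B(1) v(1) by auto
  then show ?thesis using v(2) by auto
qed
end


definition indep_mod :: "('a::field \<Rightarrow> 'b::ab_group_add \<Rightarrow> 'b) \<Rightarrow> ('b \<Rightarrow> 'b) \<Rightarrow> 'b set \<Rightarrow> 'b set \<Rightarrow> bool" where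
  "indep_mod sc T H Y \<longleftrightarrow> (\<forall>c. (\<Sum>y\<in>Y. sc (c y) (T y)) \<in> module.span sc H \<longrightarrow> (\<forall>y\<in>Y. c y = 0))"

context vector_space begin

lemma block:
  assumes lin: "Vector_Spaces.linear scale scale T"
   and infr: "\<And>G. finite G \<Longrightarrow> \<not> range T \<subseteq> span G"
   and fH: "finite H"
  shows "\<exists>Y. finite Y \<and> card Y = k \<and> indep_mod scale T H Y"
proof (induction k)
  case 0
  show ?case by (rule exI[of _ "{}"]) (simp add: indep_mod_def)
next
  case (Suc k)
  then obtain Y where Y: "finite Y" "card Y = k" "indep_mod scale T H Y" by (elim exE conjE) (rule that)
  have "\<not> range T \<subseteq> span (H \<union> T ` Y)" using infr fH Y(1) by simp
  then obtain y where y: "T y \<notin> span (H \<union> T ` Y)" by auto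
  have yY: "y \<notin> Y"
  proof
    assume "y \<in> Y"
    then have "T y \<in> H \<union> T ` Y" by simp
    then have "T y \<in> span (H \<union> T ` Y)" by (rule span_base)
    with y show False by simp
  qed
  have "indep_mod scale T H (insert y Y)"
    unfolding indep_mod_def
  proof (intro allI impI)
    fix c assume c: "(\<Sum>z\<in>insert y Y. c z *s T z) \<in> span H"
    have eq: "(\<Sum>z\<in>insert y Y. c z *s T z) = c y *s T y + (\<Sum>z\<in>Y. c z *s T z)"
      using Y(1) yY by simp
    have s1: "(\<Sum>z\<in>insert y Y. c z *s T z) \<in> span (H \<union> T ` Y)"
      using c span_mono[of H "H \<union> T ` Y"] by auto
    have s2: "(\<Sum>z\<in>Y. c z *s T z) \<in> span (H \<union> T ` Y)"
      by (rule span_sum, rule span_scale, rule span_base) auto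
    have cy: "c y = 0"
    proof (rule ccontr)
      assume "c y \<noteq> 0"
      have "c y *s T y \<in> span (H \<union> T ` Y)"
        using span_diff[OF s1 s2] unfolding eq by simp
      then have "(1 / c y) *s (c y *s T y) \<in> span (H \<union> T ` Y)" by (rule span_scale)
      then have "T y \<in> span (H \<union> T ` Y)" using \<open>c y \<noteq> 0\<close> by simp
      then show False using y by simp
    qed
    then have "(\<Sum>z\<in>Y. c z *s T z) \<in> span H" using c eq by simp
    then have "\<forall>z\<in>Y. c z = 0" using Y(3) unfolding indep_mod_def by (elim allE impE) simp_all
    then show "\<forall>z\<in>insert y Y. c z = 0" using cy by simp
  qed
  then show ?case using Y yY by (intro exI[of _ "insert y Y"]) simp
qed

lemma sum_set_as_scaled:
  assumes "finite X" "J \<subseteq> X"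
  shows "(\<Sum>x\<in>J. x) = (\<Sum>x\<in>X. scale (if x \<in> J then 1 else 0) (x::'b))"
proof -
  have "(\<Sum>x\<in>X. (if x \<in> J then 1 else 0) *s x) = (\<Sum>x\<in>X. if x \<in> J then x else 0)"
    by (rule sum.cong) auto
  also have "\<dots> = (\<Sum>x\<in>X \<inter> J. x)" using assms(1) by (simp add: sum.If_cases)
  also have "X \<inter> J = J" using assms(2) by auto
  finally show ?thesis by simp
qed

lemma bad_inj:
  assumes lin: "Vector_Spaces.linear scale scale T"
    and fX: "finite X" and YX: "Y \<subseteq> X" and im: "indep_mod scale T H Y"
    and J: "J \<subseteq> X" "T (\<Sum>x\<in>J. x) \<in> span H"
    and J': "J' \<subseteq> X" "T (\<Sum>x\<in>J'. x) \<in> span H"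
    and eq: "J - Y = J' - Y"
  shows "J = J'"
proof -
  interpret L: Vector_Spaces.linear scale scale T by (rule lin)
  define c where "c y = (if y \<in> J then 1 else 0) - (if y \<in> J' then 1 else (0::'a))" for y
  have "(\<Sum>x\<in>J. x) - (\<Sum>x\<in>J'. x) = (\<Sum>x\<in>X. c x *s x)"
    unfolding sum_set_as_scaled[OF fX J(1)] sum_set_as_scaled[OF fX J'(1)] c_def
    by (simp add: sum_subtractf scale_left_diff_distrib)
  also have "\<dots> = (\<Sum>x\<in>Y. c x *s x)"
  proof (rule sum.mono_neutral_right[OF fX YX], intro ballI)
    fix x assume "x \<in> X - Y"
    then have "(x \<in> J) = (x \<in> J')" using eq by blast
    then show "c x *s x = 0" by (simp add: c_def)
  qed
  finally have d: "(\<Sum>x\<in>J. x) - (\<Sum>x\<in>J'. x) = (\<Sum>x\<in>Y. c x *s x)" .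
  have "T ((\<Sum>x\<in>J. x) - (\<Sum>x\<in>J'. x)) \<in> span H"
    using span_diff[OF J(2) J'(2)] by (simp add: L.diff)
  then have "(\<Sum>y\<in>Y. c y *s T y) \<in> span H"
    unfolding d by (simp add: L.sum L.scale)
  then have c0: "\<forall>y\<in>Y. c y = 0" using im unfolding indep_mod_def by (elim allE impE) simp_all
  show "J = J'"
  proof (intro set_eqI iffI)
    fix x assume x: "x \<in> J"
    show "x \<in> J'"
    proof (cases "x \<in> Y")
      case True then have "c x = 0" using c0 by blast
      then show ?thesis using x by (auto simp: c_def split: if_splits)
    next
      case False then show ?thesis using x eq by blast
    qed
  next
    fix x assume x: "x \<in> J'"
    show "x \<in> J"
    proof (cases "x \<in> Y")
      case True then have "c x = 0" using c0 by blast
      then show ?thesis using x by (auto simp: c_def split: if_splits)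
    next
      case False then show ?thesis using x eq by blast
    qed
  qed
qed

lemma avoid:
  fixes T :: "'i \<Rightarrow> 'b \<Rightarrow> 'b" and H :: "'i \<Rightarrow> 'b set"
  assumes fI: "finite I"
   and lin: "\<And>i. i\<in>I \<Longrightarrow> Vector_Spaces.linear scale scale (T i)"
   and infr: "\<And>i G. i\<in>I \<Longrightarrow> finite G \<Longrightarrow> \<not> range (T i) \<subseteq> span G"
   and fH: "\<And>i. i\<in>I \<Longrightarrow> finite (H i)"
  shows "\<exists>v. \<forall>i\<in>I. T i v \<notin> span (H i)"
proof (cases "I = {}")
  case True then show ?thesis by simp
next
  case False
  define m where "m = card I"
  have "\<forall>i\<in>I. \<exists>Y. finite Y \<and> card Y = m \<and> indep_mod scale (T i) (H i) Y"
  proof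
    fix i assume i: "i \<in> I"
    show "\<exists>Y. finite Y \<and> card Y = m \<and> indep_mod scale (T i) (H i) Y"
      by (rule block) (use i lin infr fH in auto)
  qed
  from bchoice[OF this] obtain Y where Y: "\<forall>i\<in>I. finite (Y i) \<and> card (Y i) = m \<and> indep_mod scale (T i) (H i) (Y i)"
    by (elim exE) (rule that)
  define X where "X = (\<Union>i\<in>I. Y i)"
  have fX: "finite X" using Y fI by (simp add: X_def)
  have YX: "Y i \<subseteq> X" if "i \<in> I" for i using that by (auto simp: X_def)
  obtain i0 where i0: "i0 \<in> I" using False by auto
  have mX: "m \<le> card X" using card_mono[OF fX YX[OF i0]] Y i0 by simp
  define bad where "bad i = {J. J \<subseteq> X \<and> T i (\<Sum>x\<in>J. x) \<in> span (H i)}" for i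
  have cb: "card (bad i) \<le> 2 ^ (card X - m)" if i: "i \<in> I" for i
  proof -
    have inj: "inj_on (\<lambda>J. J - Y i) (bad i)"
    proof (rule inj_onI)
      fix J J' assume "J \<in> bad i" "J' \<in> bad i" "J - Y i = J' - Y i"
      then show "J = J'"
        using bad_inj[OF lin[OF i] fX YX[OF i] _ _ _ _ _ , of "H i" J J'] Y i
        by (simp add: bad_def)
    qed
    have sub: "(\<lambda>J. J - Y i) ` bad i \<subseteq> Pow (X - Y i)" by (auto simp: bad_def)
    have "card (bad i) = card ((\<lambda>J. J - Y i) ` bad i)" using card_image[OF inj] by simp
    also have "\<dots> \<le> card (Pow (X - Y i))" using card_mono[OF _ sub] fX by simp
    also have "\<dots> = 2 ^ (card X - m)"
      using card_Pow[of "X - Y i"] card_Diff_subset[OF _ YX[OF i]] Y i fX by auto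
    finally show ?thesis .
  qed
  have fb: "finite (bad i)" for i using fX by (simp add: bad_def)
  have "card (\<Union>i\<in>I. bad i) \<le> (\<Sum>i\<in>I. card (bad i))" by (rule card_UN_le[OF fI])
  also have "\<dots> \<le> (\<Sum>i\<in>I. 2 ^ (card X - m))" by (rule sum_mono) (use cb in simp)
  also have "\<dots> = m * 2 ^ (card X - m)" by (simp add: m_def)
  also have "\<dots> < 2 ^ m * 2 ^ (card X - m)" using less_exp[of m] by simp
  also have "\<dots> = 2 ^ card X" using mX by (simp flip: power_add)
  also have "\<dots> = card (Pow X)" using card_Pow[of X] fX by simp
  finally have lt: "card (\<Union>i\<in>I. bad i) < card (Pow X)" .
  have "\<not> Pow X \<subseteq> (\<Union>i\<in>I. bad i)"
  proof
    assume "Pow X \<subseteq> (\<Union>i\<in>I. bad i)"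
    then have "card (Pow X) \<le> card (\<Union>i\<in>I. bad i)"
      by (rule card_mono[rotated]) (use fI fb in simp)
    then show False using lt by simp
  qed
  then obtain J where J: "J \<subseteq> X" "\<forall>i\<in>I. J \<notin> bad i" by auto
  show ?thesis
  proof (rule exI[of _ "\<Sum>x\<in>J. x"], intro ballI)
    fix i assume "i \<in> I"
    then show "T i (\<Sum>x\<in>J. x) \<notin> span (H i)" using J by (simp add: bad_def)
  qed
qed

lemma inj_extend:
  assumes lin: "Vector_Spaces.linear scale scale T"
    and inj: "inj_on T (span S)" and v: "T v \<notin> span (T ` S)"
  shows "inj_on T (span (insert v S))"
proof -
  interpret L: Vector_Spaces.linear scale scale T by (rule lin)
  show ?thesis
  proof (subst L.inj_on_iff_eq_0[OF subspace_span], intro ballI impI)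
    fix x assume x: "x \<in> span (insert v S)" "T x = 0"
    obtain k where k: "x - scale k v \<in> span S" using x(1) span_breakdown_eq by auto
    have Tk: "T (x - scale k v) = - scale k (T v)" using x(2) by (simp add: L.diff L.scale)
    have k0: "k = 0"
    proof (rule ccontr)
      assume "k \<noteq> 0"
      have "T (x - scale k v) \<in> T ` span S" using k by simp
      then have "T (x - scale k v) \<in> span (T ` S)" using L.span_image by simp
      then have "scale (- 1 / k) (T (x - scale k v)) \<in> span (T ` S)" by (rule span_scale)
      then have "T v \<in> span (T ` S)" using \<open>k \<noteq> 0\<close> unfolding Tk by simp
      with v show False by simp
    qed
    then have "x \<in> span S" using k by simp
    moreover have "0 \<in> span S" by (rule span_zero)
    moreover have "T 0 = 0" by (rule L.zero)
    ultimately show "x = 0" using inj x(2) by (metis inj_onD)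
  qed
qed

end


definition lcyl :: "'a list \<Rightarrow> (nat \<Rightarrow> 'a) set" where
  "lcyl u = {\<sigma>. \<forall>i<length u. \<sigma> i = u ! i}"

definition lext :: "'a list \<Rightarrow> 'a list \<Rightarrow> bool" where
  "lext u u' \<longleftrightarrow> length u < length u' \<and> take (length u) u' = u"

definition good :: "((nat \<Rightarrow> nat) \<Rightarrow> 'c) \<Rightarrow> 'c set \<Rightarrow> nat list \<Rightarrow> bool" where
  "good \<phi> S u \<longleftrightarrow> uncountable (\<phi> ` lcyl u \<inter> S)"

definition core :: "((nat \<Rightarrow> nat) \<Rightarrow> 'c) \<Rightarrow> 'c set \<Rightarrow> nat list \<Rightarrow> (nat \<Rightarrow> nat) set" where
  "core \<phi> S u = {\<sigma> \<in> lcyl u. \<phi> \<sigma> \<in> S \<and> (\<forall>k. good \<phi> S (map \<sigma> [0..<k]))}"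

definition sepr :: "((nat \<Rightarrow> nat) \<Rightarrow> ('b \<Rightarrow> 'c)) \<Rightarrow> nat list \<Rightarrow> nat list \<Rightarrow> bool" where
  "sepr \<phi> u0 u1 \<longleftrightarrow> (\<exists>x. \<forall>\<sigma>\<in>lcyl u0. \<forall>\<tau>\<in>lcyl u1. \<phi> \<sigma> x \<noteq> \<phi> \<tau> x)"

lemma lcyl_mono: "lext u u' \<Longrightarrow> lcyl u' \<subseteq> lcyl u"
proof
  fix \<sigma> assume e: "lext u u'" and s: "\<sigma> \<in> lcyl u'"
  show "\<sigma> \<in> lcyl u" unfolding lcyl_def
  proof (intro CollectI allI impI)
    fix i assume i: "i < length u"
    then have "i < length u'" using e by (simp add: lext_def)
    then have "\<sigma> i = u' ! i" using s by (simp add: lcyl_def)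
    also have "\<dots> = take (length u) u' ! i" using i by simp
    also have "\<dots> = u ! i" using e by (simp add: lext_def)
    finally show "\<sigma> i = u ! i" .
  qed
qed

lemma lext_trans: "lext u v \<Longrightarrow> lext v w \<Longrightarrow> lext u w"
  unfolding lext_def by (metis min.absorb1 less_imp_le order.strict_trans take_take)

lemma lcyl_pre: "lcyl (map \<sigma> [0..<k]) = cyl \<sigma> k"
  by (auto simp: lcyl_def cyl_def)

lemma in_lcyl_pre: "\<sigma> \<in> lcyl (map \<sigma> [0..<k])"
  by (simp add: lcyl_def)

lemma pre_of_lcyl: "\<sigma> \<in> lcyl u \<Longrightarrow> map \<sigma> [0..<length u] = u"
  by (intro nth_equalityI) (auto simp: lcyl_def)

lemma lcyl_nonempty: "(\<lambda>j. if j < length u then u ! j else undefined) \<in> lcyl u"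
  by (simp add: lcyl_def)

lemma core_unc:
  assumes g: "good \<phi> S u"
  shows "uncountable (\<phi> ` core \<phi> S u)"
proof
  assume c: "countable (\<phi> ` core \<phi> S u)"
  have sub: "\<phi> ` lcyl u \<inter> S \<subseteq> \<phi> ` core \<phi> S u \<union> (\<Union>w\<in>{w. \<not> good \<phi> S w}. \<phi> ` lcyl w \<inter> S)"
  proof
    fix T assume "T \<in> \<phi> ` lcyl u \<inter> S"
    then obtain \<sigma> where s: "\<sigma> \<in> lcyl u" "T = \<phi> \<sigma>" "\<phi> \<sigma> \<in> S" by auto
    show "T \<in> \<phi> ` core \<phi> S u \<union> (\<Union>w\<in>{w. \<not> good \<phi> S w}. \<phi> ` lcyl w \<inter> S)"
    proof (cases "\<forall>k. good \<phi> S (map \<sigma> [0..<k])")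
      case True
      then have "\<sigma> \<in> core \<phi> S u" using s by (simp add: core_def)
      then show ?thesis using s by auto
    next
      case False
      then obtain k where k: "\<not> good \<phi> S (map \<sigma> [0..<k])" by auto
      have "T \<in> \<phi> ` lcyl (map \<sigma> [0..<k]) \<inter> S" using s in_lcyl_pre[of \<sigma> k] by auto
      then show ?thesis using k by blast
    qed
  qed
  have "countable (\<Union>w\<in>{w. \<not> good \<phi> S w}. \<phi> ` lcyl w \<inter> S)"
    by (rule countable_UN) (auto simp: good_def)
  then have "countable (\<phi> ` lcyl u \<inter> S)"
    using countable_subset[OF sub] c by blast
  then show False using g by (simp add: good_def)
qed

lemma refine:
  assumes cont: "\<And>\<sigma> x. \<exists>k. \<forall>\<tau>\<in>cyl \<sigma> k. \<phi> \<tau> x = \<phi> \<sigma> x"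
    and s: "\<sigma> \<in> core \<phi> S u" and fX: "finite X"
  shows "\<exists>u'. lext u u' \<and> good \<phi> S u' \<and> (\<forall>\<tau>\<in>lcyl u'. \<forall>x\<in>X. \<phi> \<tau> x = \<phi> \<sigma> x)"
proof -
  obtain K where K: "\<And>x. \<forall>\<tau>\<in>cyl \<sigma> (K x). \<phi> \<tau> x = \<phi> \<sigma> x"
    using cont by metis
  define k where "k = Max (insert (Suc (length u)) (K ` X))"
  have kK: "K x \<le> k" if "x \<in> X" for x using fX that by (simp add: k_def)
  have ku: "Suc (length u) \<le> k" using fX by (simp add: k_def)
  define u' where "u' = map \<sigma> [0..<k]"
  have su: "\<sigma> \<in> lcyl u" using s by (simp add: core_def)
  have "take (length u) u' = map \<sigma> [0..<length u]"
    using ku by (simp add: u'_def take_map)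
  also have "\<dots> = u" using pre_of_lcyl[OF su] .
  finally have "lext u u'" using ku by (simp add: lext_def u'_def)
  moreover have "good \<phi> S u'" using s by (simp add: core_def u'_def)
  moreover have "\<forall>\<tau>\<in>lcyl u'. \<forall>x\<in>X. \<phi> \<tau> x = \<phi> \<sigma> x"
  proof (intro ballI)
    fix \<tau> x assume t: "\<tau> \<in> lcyl u'" and x: "x \<in> X"
    then have "\<tau> \<in> cyl \<sigma> (K x)" using kK[OF x] by (auto simp: u'_def lcyl_pre cyl_def)
    then show "\<phi> \<tau> x = \<phi> \<sigma> x" using K by blast
  qed
  ultimately show ?thesis by blast
qed

lemma split:
  assumes cont: "\<And>\<sigma> x. \<exists>k. \<forall>\<tau>\<in>cyl \<sigma> k. \<phi> \<tau> x = \<phi> \<sigma> x"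
    and g: "good \<phi> S u"
  shows "\<exists>u0 u1. lext u u0 \<and> lext u u1 \<and> good \<phi> S u0 \<and> good \<phi> S u1 \<and> sepr \<phi> u0 u1"
proof -
  have inf: "infinite (\<phi> ` core \<phi> S u)" using core_unc[OF g] countable_finite by blast
  then obtain T0 where T0: "T0 \<in> \<phi> ` core \<phi> S u" by (metis ex_in_conv finite.emptyI)
  have "infinite (\<phi> ` core \<phi> S u - {T0})" using inf by simp
  then obtain T1 where T1: "T1 \<in> \<phi> ` core \<phi> S u - {T0}" by (metis ex_in_conv finite.emptyI)
  obtain \<sigma>0 where s0: "\<sigma>0 \<in> core \<phi> S u" "T0 = \<phi> \<sigma>0" using T0 by auto
  obtain \<sigma>1 where s1: "\<sigma>1 \<in> core \<phi> S u" "T1 = \<phi> \<sigma>1" using T1 by auto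
  have "\<phi> \<sigma>0 \<noteq> \<phi> \<sigma>1" using T1 s0 s1 by auto
  then obtain x where x: "\<phi> \<sigma>0 x \<noteq> \<phi> \<sigma>1 x" by (meson ext)
  obtain u0 where u0: "lext u u0" "good \<phi> S u0" "\<forall>\<tau>\<in>lcyl u0. \<forall>y\<in>{x}. \<phi> \<tau> y = \<phi> \<sigma>0 y"
    using refine[OF cont s0(1), of "{x}"] by auto
  obtain u1 where u1: "lext u u1" "good \<phi> S u1" "\<forall>\<tau>\<in>lcyl u1. \<forall>y\<in>{x}. \<phi> \<tau> y = \<phi> \<sigma>1 y"
    using refine[OF cont s1(1), of "{x}"] by auto
  have "sepr \<phi> u0 u1" unfolding sepr_def using u0(3) u1(3) x by (intro exI[of _ x]) auto
  then show ?thesis using u0 u1 by blast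
qed


definition inv :: "('a::field \<Rightarrow> 'b::ab_group_add \<Rightarrow> 'b) \<Rightarrow> ((nat \<Rightarrow> nat) \<Rightarrow> 'b \<Rightarrow> 'b) \<Rightarrow> ('b \<Rightarrow> 'b) set
    \<Rightarrow> (('b \<Rightarrow> 'b) \<Rightarrow> 'b list \<Rightarrow> bool) \<Rightarrow> nat \<Rightarrow> 'b list \<Rightarrow> (bool list \<Rightarrow> nat list) \<Rightarrow> bool" where
  "inv sc \<phi> S M n vs U \<longleftrightarrow> length vs = n \<and> \<not> module.dependent sc (set vs) \<and> distinct vs \<and>
     (\<forall>s. length s = n \<longrightarrow> good \<phi> S (U s) \<and> (\<forall>\<tau>\<in>lcyl (U s). M (\<phi> \<tau>) vs))"

definition stp :: "('a::field \<Rightarrow> 'b::ab_group_add \<Rightarrow> 'b) \<Rightarrow> ((nat \<Rightarrow> nat) \<Rightarrow> 'b \<Rightarrow> 'b) \<Rightarrow> ('b \<Rightarrow> 'b) set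
    \<Rightarrow> (('b \<Rightarrow> 'b) \<Rightarrow> 'b list \<Rightarrow> bool) \<Rightarrow> nat \<Rightarrow> 'b list \<Rightarrow> (bool list \<Rightarrow> nat list)
    \<Rightarrow> 'b list \<Rightarrow> (bool list \<Rightarrow> nat list) \<Rightarrow> bool" where
  "stp sc \<phi> S M n vs U vs' U' \<longleftrightarrow> inv sc \<phi> S M (Suc n) vs' U' \<and> (\<exists>v. vs' = vs @ [v]) \<and>
     (\<forall>s. length s = n \<longrightarrow> lext (U s) (U' (s @ [True])) \<and> lext (U s) (U' (s @ [False])) \<and>
        sepr \<phi> (U' (s @ [True])) (U' (s @ [False])))"

context vector_space begin

lemma step_exists:
  assumes cont: "\<And>\<sigma> x. \<exists>k. \<forall>\<tau>\<in>cyl \<sigma> k. \<phi> \<tau> x = \<phi> \<sigma> x"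
    and lin: "\<And>\<sigma>. Vector_Spaces.linear scale scale (\<phi> \<sigma>)"
    and exth: "\<And>vs (F::bool list set) Tf. finite F \<Longrightarrow> F \<noteq> {} \<Longrightarrow> (\<forall>s\<in>F. Tf s \<in> S \<and> M (Tf s) vs)
               \<Longrightarrow> \<exists>v. v \<notin> span (set vs) \<and> (\<forall>s\<in>F. M (Tf s) (vs @ [v]))"
    and loc: "\<And>T \<tau> vs. T \<in> S \<Longrightarrow> M T vs \<Longrightarrow> Vector_Spaces.linear scale scale \<tau> \<Longrightarrow> (\<forall>x\<in>set vs. \<tau> x = T x) \<Longrightarrow> M \<tau> vs"
    and I: "inv scale \<phi> S M n vs U"
  shows "\<exists>vs' U'. stp scale \<phi> S M n vs U vs' U'"
proof -
  define F where "F = {s::bool list. length s = n}"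
  have fF: "finite F" using finite_lists_length_eq[of "UNIV::bool set" n] by (simp add: F_def)
  have nF: "F \<noteq> {}" unfolding F_def by (metis (mono_tags) empty_Collect_eq length_replicate)
  have I': "\<And>s. s \<in> F \<Longrightarrow> good \<phi> S (U s) \<and> (\<forall>\<tau>\<in>lcyl (U s). M (\<phi> \<tau>) vs)"
    using I by (simp add: inv_def F_def)
  have "\<forall>s\<in>F. \<exists>\<sigma>. \<sigma> \<in> core \<phi> S (U s)"
  proof
    fix s assume "s \<in> F"
    then have "uncountable (\<phi> ` core \<phi> S (U s))" using core_unc I' by blast
    then show "\<exists>\<sigma>. \<sigma> \<in> core \<phi> S (U s)" by (metis countable_empty ex_in_conv image_empty)
  qed
  from bchoice[OF this] obtain Sg where Sg: "\<forall>s\<in>F. Sg s \<in> core \<phi> S (U s)" by (elim exE) (rule that)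
  define Tf where "Tf s = \<phi> (Sg s)" for s
  have TfM: "\<forall>s\<in>F. Tf s \<in> S \<and> M (Tf s) vs"
  proof
    fix s assume s: "s \<in> F"
    have "Sg s \<in> lcyl (U s)" "\<phi> (Sg s) \<in> S" using Sg s by (auto simp: core_def)
    then show "Tf s \<in> S \<and> M (Tf s) vs" using I'[OF s] by (simp add: Tf_def)
  qed
  obtain v where v: "v \<notin> span (set vs)" "\<forall>s\<in>F. M (Tf s) (vs @ [v])"
    using exth[OF fF nF TfM] by (elim exE conjE) (rule that)
  have "\<forall>s\<in>F. \<exists>ab. lext (U s) (fst ab) \<and> lext (U s) (snd ab) \<and> good \<phi> S (fst ab) \<and> good \<phi> S (snd ab)
          \<and> sepr \<phi> (fst ab) (snd ab) \<and> (\<forall>\<tau>\<in>lcyl (fst ab) \<union> lcyl (snd ab). M (\<phi> \<tau>) (vs @ [v]))"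
  proof
    fix s assume s: "s \<in> F"
    have sgc: "Sg s \<in> core \<phi> S (U s)" using Sg s by blast
    have "\<exists>w. lext (U s) w \<and> good \<phi> S w \<and> (\<forall>\<tau>\<in>lcyl w. \<forall>x\<in>set (vs @ [v]). \<phi> \<tau> x = \<phi> (Sg s) x)"
      by (rule refine[of \<phi>, OF cont sgc finite_set])
    then obtain w where w: "lext (U s) w" "good \<phi> S w" "\<forall>\<tau>\<in>lcyl w. \<forall>x\<in>set (vs @ [v]). \<phi> \<tau> x = \<phi> (Sg s) x"
      by (elim exE conjE) (rule that)
    obtain a b where ab: "lext w a" "lext w b" "good \<phi> S a" "good \<phi> S b" "sepr \<phi> a b"
      using split[of \<phi>, OF cont w(2)] by auto
    have M: "M (\<phi> \<tau>) (vs @ [v])" if "\<tau> \<in> lcyl a \<union> lcyl b" for \<tau>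
    proof -
      have "\<tau> \<in> lcyl w" using that lcyl_mono[OF ab(1)] lcyl_mono[OF ab(2)] by auto
      then have "\<forall>x\<in>set (vs @ [v]). \<phi> \<tau> x = Tf s x" using w(3) by (simp add: Tf_def)
      then show ?thesis using loc[OF _ _ lin] v(2) s TfM by blast
    qed
    show "\<exists>ab. lext (U s) (fst ab) \<and> lext (U s) (snd ab) \<and> good \<phi> S (fst ab) \<and> good \<phi> S (snd ab)
          \<and> sepr \<phi> (fst ab) (snd ab) \<and> (\<forall>\<tau>\<in>lcyl (fst ab) \<union> lcyl (snd ab). M (\<phi> \<tau>) (vs @ [v]))"
      using ab M lext_trans[OF w(1) ab(1)] lext_trans[OF w(1) ab(2)]
      by (intro exI[of _ "(a, b)"]) simp
  qed
  from bchoice[OF this] obtain AB where AB: "\<forall>s\<in>F. lext (U s) (fst (AB s)) \<and> lext (U s) (snd (AB s)) \<and>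
     good \<phi> S (fst (AB s)) \<and> good \<phi> S (snd (AB s)) \<and> sepr \<phi> (fst (AB s)) (snd (AB s)) \<and>
     (\<forall>\<tau>\<in>lcyl (fst (AB s)) \<union> lcyl (snd (AB s)). M (\<phi> \<tau>) (vs @ [v]))" by (elim exE) (rule that)
  define U' where "U' t = (if t = [] then [] else if last t then fst (AB (butlast t)) else snd (AB (butlast t)))" for t
  have U'T: "U' (s @ [True]) = fst (AB s)" for s by (simp add: U'_def)
  have U'F: "U' (s @ [False]) = snd (AB s)" for s by (simp add: U'_def)
  have vnot: "v \<notin> set vs" using v(1) span_superset by auto
  have ind: "\<not> dependent (set (vs @ [v]))"
    using independent_insertI[OF v(1)] I by (simp add: inv_def)
  have "inv scale \<phi> S M (Suc n) (vs @ [v]) U'"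
    unfolding inv_def
  proof (intro conjI allI impI)
    show "length (vs @ [v]) = Suc n" using I by (simp add: inv_def)
    show "\<not> dependent (set (vs @ [v]))" by (rule ind)
    show "distinct (vs @ [v])" using I vnot by (simp add: inv_def)
    fix t :: "bool list" assume t: "length t = Suc n"
    then have tF: "butlast t \<in> F" by (simp add: F_def)
    have Ut: "U' t = (if last t then fst (AB (butlast t)) else snd (AB (butlast t)))"
      using t by (auto simp: U'_def)
    have ABt: "good \<phi> S (fst (AB (butlast t))) \<and> good \<phi> S (snd (AB (butlast t))) \<and>
       (\<forall>\<tau>\<in>lcyl (fst (AB (butlast t))) \<union> lcyl (snd (AB (butlast t))). M (\<phi> \<tau>) (vs @ [v]))"
      using AB tF by blast
    show "good \<phi> S (U' t)" using Ut ABt by simp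
    show "\<forall>\<tau>\<in>lcyl (U' t). M (\<phi> \<tau>) (vs @ [v])" using Ut ABt by simp
  qed
  moreover have "\<forall>s. length s = n \<longrightarrow> lext (U s) (U' (s @ [True])) \<and> lext (U s) (U' (s @ [False])) \<and>
        sepr \<phi> (U' (s @ [True])) (U' (s @ [False]))"
    using AB by (simp add: U'T U'F F_def)
  ultimately have "stp scale \<phi> S M n vs U (vs @ [v]) U'" unfolding stp_def by blast
  then show ?thesis by blast
qed

lemma construction:
  fixes \<phi> :: "(nat \<Rightarrow> nat) \<Rightarrow> 'b \<Rightarrow> 'b" and S :: "('b \<Rightarrow> 'b) set" and M :: "('b \<Rightarrow> 'b) \<Rightarrow> 'b list \<Rightarrow> bool"
  assumes cont: "\<And>\<sigma> x. \<exists>k. \<forall>\<tau>\<in>cyl \<sigma> k. \<phi> \<tau> x = \<phi> \<sigma> x"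
    and lin: "\<And>\<sigma>. Vector_Spaces.linear scale scale (\<phi> \<sigma>)"
    and exth: "\<And>vs (F::bool list set) Tf. finite F \<Longrightarrow> F \<noteq> {} \<Longrightarrow> (\<forall>s\<in>F. Tf s \<in> S \<and> M (Tf s) vs)
               \<Longrightarrow> \<exists>v. v \<notin> span (set vs) \<and> (\<forall>s\<in>F. M (Tf s) (vs @ [v]))"
    and loc: "\<And>T \<tau> vs. T \<in> S \<Longrightarrow> M T vs \<Longrightarrow> Vector_Spaces.linear scale scale \<tau> \<Longrightarrow> (\<forall>x\<in>set vs. \<tau> x = T x) \<Longrightarrow> M \<tau> vs"
    and Mnil: "\<And>T. M T []"
    and unc: "uncountable S" and Sphi: "S \<subseteq> range \<phi>"
  shows "\<exists>f vseq. (\<forall>b. f b \<in> range \<phi>) \<and> (\<forall>b x. \<exists>k. \<forall>b'\<in>cyl b k. f b' x = f b x) \<and>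
     (\<forall>b n. f (b(n := \<not> b n)) \<noteq> f b) \<and> (\<forall>b n. M (f b) (map vseq [0..<n])) \<and>
     independent (range vseq) \<and> inj vseq"
proof -
  define nxt where "nxt n p = (SOME q. stp scale \<phi> S M n (fst p) (snd p) (fst q) (snd q))" for n p
  define st where "st = rec_nat ([], (\<lambda>_::bool list. []::nat list)) nxt"
  have st0: "st 0 = ([], \<lambda>_. [])" by (simp add: st_def)
  have stS: "st (Suc n) = nxt n (st n)" for n by (simp add: st_def)
  have inv0: "inv scale \<phi> S M 0 [] (\<lambda>_. [])"
  proof -
    have "\<phi> ` lcyl [] \<inter> S = S" using Sphi by (auto simp: lcyl_def)
    then have "good \<phi> S []" using unc by (simp add: good_def)
    then show ?thesis using Mnil independent_empty by (simp add: inv_def)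
  qed
  have stpI: "stp scale \<phi> S M n (fst (st n)) (snd (st n)) (fst (st (Suc n))) (snd (st (Suc n)))"
    if I: "inv scale \<phi> S M n (fst (st n)) (snd (st n))" for n
  proof -
    have "\<exists>vs' U'. stp scale \<phi> S M n (fst (st n)) (snd (st n)) vs' U'"
      by (rule step_exists[OF cont lin exth loc I])
    then obtain vs' U' where "stp scale \<phi> S M n (fst (st n)) (snd (st n)) vs' U'"
      by (elim exE) (rule that)
    then have "stp scale \<phi> S M n (fst (st n)) (snd (st n)) (fst (vs', U')) (snd (vs', U'))" by simp
    then show ?thesis unfolding stS nxt_def
      by (rule someI[of "\<lambda>q. stp scale \<phi> S M n (fst (st n)) (snd (st n)) (fst q) (snd q)"])
  qed
  have invn: "inv scale \<phi> S M n (fst (st n)) (snd (st n))" for n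
  proof (induction n)
    case 0 then show ?case using inv0 st0 by simp
  next
    case (Suc n) then show ?case using stpI[OF Suc] by (simp add: stp_def)
  qed
  have stpn: "stp scale \<phi> S M n (fst (st n)) (snd (st n)) (fst (st (Suc n))) (snd (st (Suc n)))" for n
    using stpI[OF invn] .
  define vseq where "vseq n = fst (st (Suc n)) ! n" for n
  have vs_eq: "fst (st n) = map vseq [0..<n]" for n
  proof (induction n)
    case 0 then show ?case using st0 by simp
  next
    case (Suc n)
    obtain v where v: "fst (st (Suc n)) = fst (st n) @ [v]" using stpn[of n] by (auto simp: stp_def)
    have len: "length (fst (st n)) = n" using invn[of n] by (simp add: inv_def)
    have "vseq n = v" using v len by (simp add: vseq_def nth_append)
    then show ?case using v Suc by simp
  qed
  define node where "node b n = snd (st n) (map b [0..<n])" for b :: "nat \<Rightarrow> bool" and n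
  have nodeS: "lext (node b n) (node b (Suc n))" for b n
  proof -
    have "map b [0..<Suc n] = map b [0..<n] @ [b n]" by simp
    moreover have "lext (snd (st n) (map b [0..<n])) (snd (st (Suc n)) (map b [0..<n] @ [c]))" for c
      using stpn[of n] by (cases c) (simp_all add: stp_def)
    ultimately show ?thesis unfolding node_def by metis
  qed
  have nodemono: "lcyl (node b n) \<subseteq> lcyl (node b m)" if "m \<le> n" for b m n
    using that
  proof (induction rule: dec_induct)
    case base then show ?case by simp
  next
    case (step k) then show ?case using lcyl_mono[OF nodeS[of b k]] by blast
  qed
  have nodelen: "n \<le> length (node b n)" for b n
  proof (induction n)
    case 0 then show ?case by simp
  next
    case (Suc n) then show ?case using nodeS[of b n] by (simp add: lext_def)
  qed
  define \<psi> where "\<psi> b i = node b (Suc i) ! i" for b i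
  have psi: "\<psi> b \<in> lcyl (node b n)" for b n
    unfolding lcyl_def
  proof (intro CollectI allI impI)
    fix i assume i: "i < length (node b n)"
    define N where "N = max n (Suc i)"
    define \<sigma> where "\<sigma> = (\<lambda>j. if j < length (node b N) then node b N ! j else undefined)"
    have s: "\<sigma> \<in> lcyl (node b N)" unfolding \<sigma>_def by (rule lcyl_nonempty)
    have s1: "\<sigma> \<in> lcyl (node b n)" using s nodemono[of n N b] by (auto simp: N_def)
    have s2: "\<sigma> \<in> lcyl (node b (Suc i))" using s nodemono[of "Suc i" N b] by (auto simp: N_def)
    have "i < length (node b (Suc i))" using nodelen[of "Suc i" b] by simp
    then have "\<sigma> i = node b (Suc i) ! i" using s2 by (simp add: lcyl_def)
    moreover have "\<sigma> i = node b n ! i" using s1 i by (simp add: lcyl_def)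
    ultimately show "\<psi> b i = node b n ! i" by (simp add: \<psi>_def)
  qed
  define f where "f b = \<phi> (\<psi> b)" for b
  have P1: "\<forall>b. f b \<in> range \<phi>" by (simp add: f_def)
  have P2: "\<forall>b x. \<exists>k. \<forall>b'\<in>cyl b k. f b' x = f b x"
  proof (intro allI)
    fix b :: "nat \<Rightarrow> bool" and x
    obtain K where K: "\<forall>\<tau>\<in>cyl (\<psi> b) K. \<phi> \<tau> x = \<phi> (\<psi> b) x" using cont by blast
    have "\<forall>b'\<in>cyl b K. f b' x = f b x"
    proof
      fix b' assume b': "b' \<in> cyl b K"
      then have mm: "map b' [0..<K] = map b [0..<K]" by (simp add: cyl_def)
      have nn: "node b' K = node b K" unfolding node_def using mm by (simp only:)
      have "\<psi> b' \<in> cyl (\<psi> b) K"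
        unfolding cyl_def
      proof (intro CollectI allI impI)
        fix i assume "i < K"
        then have i: "i < length (node b K)" using nodelen[of K b] by simp
        have "\<psi> b' i = node b K ! i" using psi[of b' K] i nn by (simp add: lcyl_def)
        moreover have "\<psi> b i = node b K ! i" using psi[of b K] i by (simp add: lcyl_def)
        ultimately show "\<psi> b' i = \<psi> b i" by simp
      qed
      then show "f b' x = f b x" using K by (simp add: f_def)
    qed
    then show "\<exists>k. \<forall>b'\<in>cyl b k. f b' x = f b x" by blast
  qed
  have P3: "\<forall>b n. f (b(n := \<not> b n)) \<noteq> f b"
  proof (intro allI)
    fix b :: "nat \<Rightarrow> bool" and n :: nat
    define b' where "b' = b(n := \<not> b n)"
    define s where "s = map b [0..<n]"
    have s': "map b' [0..<n] = s" by (simp add: s_def b'_def)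
    have nb: "node b (Suc n) = snd (st (Suc n)) (s @ [b n])" by (simp add: node_def s_def)
    have nb': "node b' (Suc n) = snd (st (Suc n)) (s @ [\<not> b n])"
    proof -
      have "map b' [0..<Suc n] = map b' [0..<n] @ [b' n]" by simp
      also have "\<dots> = s @ [\<not> b n]" using s' by (simp add: b'_def)
      finally show ?thesis unfolding node_def by (simp only:)
    qed
    have "sepr \<phi> (snd (st (Suc n)) (s @ [True])) (snd (st (Suc n)) (s @ [False]))"
      using stpn[of n] by (simp add: stp_def s_def)
    then obtain x where x: "\<forall>\<sigma>\<in>lcyl (snd (st (Suc n)) (s @ [True])). \<forall>\<tau>\<in>lcyl (snd (st (Suc n)) (s @ [False])). \<phi> \<sigma> x \<noteq> \<phi> \<tau> x"
      unfolding sepr_def by blast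
    have "\<phi> (\<psi> b) x \<noteq> \<phi> (\<psi> b') x"
    proof (cases "b n")
      case True
      then show ?thesis using x psi[of b "Suc n"] psi[of b' "Suc n"] nb nb' by simp
    next
      case False
      then show ?thesis using x psi[of b "Suc n"] psi[of b' "Suc n"] nb nb' by force
    qed
    then show "f (b(n := \<not> b n)) \<noteq> f b" by (auto simp: f_def b'_def)
  qed
  have P4: "\<forall>b n. M (f b) (map vseq [0..<n])"
  proof (intro allI)
    fix b :: "nat \<Rightarrow> bool" and n :: nat
    have A: "\<forall>s. length s = n \<longrightarrow> good \<phi> S (snd (st n) s) \<and> (\<forall>\<tau>\<in>lcyl (snd (st n) s). M (\<phi> \<tau>) (fst (st n)))"
      using invn[of n] by (simp add: inv_def)
    have "\<forall>\<tau>\<in>lcyl (snd (st n) (map b [0..<n])). M (\<phi> \<tau>) (fst (st n))"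
      using A[rule_format, of "map b [0..<n]"] by simp
    then show "M (f b) (map vseq [0..<n])" using psi[of b n] vs_eq[of n] by (simp add: f_def node_def)
  qed
  have P5: "independent (range vseq)"
  proof -
    have "independent (\<Union> (range (\<lambda>n. set (map vseq [0..<n]))))"
    proof (rule independent_Union_directed)
      fix c d assume "c \<in> range (\<lambda>n. set (map vseq [0..<n]))" "d \<in> range (\<lambda>n. set (map vseq [0..<n]))"
      then obtain n m where "c = vseq ` {0..<n}" "d = vseq ` {0..<m}" by auto
      then show "c \<subseteq> d \<or> d \<subseteq> c" by (cases "n \<le> m") auto
    next
      fix c assume "c \<in> range (\<lambda>n. set (map vseq [0..<n]))"
      then obtain n where "c = set (map vseq [0..<n])" by auto
      then show "independent c" using invn[of n] vs_eq[of n] by (simp add: inv_def)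
    qed
    moreover have "\<Union> (range (\<lambda>n. set (map vseq [0..<n]))) = range vseq"
      by (auto simp: image_iff) (metis atLeastLessThan_iff le0 lessI)
    ultimately show ?thesis by simp
  qed
  have P6: "inj vseq"
  proof (rule injI)
    fix i j assume e: "vseq i = vseq j"
    define N where "N = Suc (max i j)"
    have "distinct (map vseq [0..<N])" using invn[of N] vs_eq[of N] by (simp add: inv_def)
    then have "inj_on vseq {0..<N}" by (simp add: distinct_map)
    then show "i = j" using e by (auto simp: N_def dest: inj_onD)
  qed
  show ?thesis using P1 P2 P3 P4 P5 P6 by blast
qed

end


context vector_space begin

lemma span_range_prefix:
  assumes "x \<in> span (range vseq)"
  shows "\<exists>N. x \<in> span (set (map vseq [0..<N]))"
proof -
  obtain t where t: "finite t" "t \<subseteq> range vseq" "x \<in> span t" using span_finite_sub[OF assms] by blast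
  obtain C where C: "C \<subseteq> UNIV" "finite C" "t = vseq ` C" using finite_subset_image[OF t(1) t(2)] by blast
  define N where "N = Suc (Max (insert 0 C))"
  have "C \<subseteq> {0..<N}" using C(2) by (auto simp: N_def less_Suc_eq_le)
  then have "t \<subseteq> set (map vseq [0..<N])" using C(3) by auto
  then have "x \<in> span (set (map vseq [0..<N]))" using t(3) span_mono by blast
  then show ?thesis by blast
qed

lemma span_prefix_mono:
  assumes "N \<le> N'" "x \<in> span (set (map vseq [0..<N]))"
  shows "x \<in> span (set (map vseq [0..<N']))"
proof -
  have "set (map vseq [0..<N]) \<subseteq> set (map vseq [0..<N'])" using assms(1) by auto
  then show ?thesis using assms(2) span_mono by blast
qed

end

theorem theorem2p1:
  fixes sc :: "'f::{field,countable} \<Rightarrow> 'e::{ab_group_add,countable} \<Rightarrow> 'e"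
    and A :: "('e \<Rightarrow> 'e) set"
  assumes vs: "vector_space sc"
    and infdim: "\<exists>B. \<not> module.dependent sc B \<and> infinite B"
    and A_sub: "A \<subseteq> {T. Vector_Spaces.linear sc sc T}"
    and A_an: "analytic_in (linmaps_top sc) A"
    and A_unc: "uncountable A"
  shows "\<exists>P V. P \<noteq> {} \<and> perfect_in (linmaps_top sc) P \<and> P \<subseteq> A \<and>
           module.subspace sc V \<and>
           (\<exists>B\<subseteq>V. \<not> module.dependent sc B \<and> infinite B) \<and>
           ((\<forall>T\<in>P. V \<subseteq> {x. T x = 0}) \<or> (\<forall>T\<in>P. inj_on T V))"
proof -
  interpret V: vector_space sc by (rule vs)
  have VP: "vector_space_pair sc sc" by (simp add: vector_space_pair_def vs)
  have Ane: "A \<noteq> {}" using A_unc by auto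
  obtain \<phi> where \<phi>c: "continuous_map baire_space (linmaps_top sc) \<phi>" and \<phi>A: "\<phi> ` UNIV = A"
    using A_an Ane unfolding analytic_in_def by blast
  have \<phi>c': "continuous_map pointwise_discrete_top pointwise_discrete_top \<phi>"
    using \<phi>c unfolding linmaps_top_def baire_space_def continuous_map_in_subtopology by blast
  have cont: "\<And>\<sigma> x. \<exists>k. \<forall>\<tau>\<in>cyl \<sigma> k. \<phi> \<tau> x = \<phi> \<sigma> x" using cont_loc_const[OF \<phi>c'] by blast
  have linA: "\<And>T. T \<in> A \<Longrightarrow> Vector_Spaces.linear sc sc T" using A_sub by blast
  have lin: "\<And>\<sigma>. Vector_Spaces.linear sc sc (\<phi> \<sigma>)" using \<phi>A linA by blast
  obtain B0 where B0: "\<not> V.dependent B0" "infinite B0" using infdim by blast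
  define Sfin where "Sfin = {T \<in> A. \<exists>G. finite G \<and> range T \<subseteq> V.span G}"
  define Sinf where "Sinf = A - Sfin"
  have SA: "Sfin \<subseteq> range \<phi>" "Sinf \<subseteq> range \<phi>" using \<phi>A by (auto simp: Sfin_def Sinf_def)
  have "A = Sfin \<union> Sinf" by (auto simp: Sinf_def Sfin_def)
  then have cases: "uncountable Sfin \<or> uncountable Sinf" using A_unc by (metis countable_Un)
  have final: "\<exists>P V. P \<noteq> {} \<and> perfect_in (linmaps_top sc) P \<and> P \<subseteq> A \<and>
           module.subspace sc V \<and> (\<exists>B\<subseteq>V. \<not> module.dependent sc B \<and> infinite B) \<and>
           (\<forall>T\<in>P. Q T V)"
    if fv: "(\<forall>b. f b \<in> range \<phi>) \<and> (\<forall>b x. \<exists>k. \<forall>b'\<in>cyl b k. f b' x = f b x) \<and>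
     (\<forall>b n. f (b(n := \<not> b n)) \<noteq> f b) \<and> (\<forall>b n. M (f b) (map vseq [0..<n])) \<and>
     V.independent (range vseq) \<and> inj vseq"
    and MQ: "\<And>T. Vector_Spaces.linear sc sc T \<Longrightarrow> (\<forall>n. M T (map vseq [0..<n])) \<Longrightarrow> Q T (V.span (range vseq))"
    for f :: "(nat \<Rightarrow> bool) \<Rightarrow> 'e \<Rightarrow> 'e" and vseq :: "nat \<Rightarrow> 'e" and M Q
  proof -
    have fv1: "\<forall>b. f b \<in> range \<phi>" using fv by (elim conjE) assumption
    have fv2: "\<forall>b x. \<exists>k. \<forall>b'\<in>cyl b k. f b' x = f b x" using fv by (elim conjE) assumption
    have fv3: "\<forall>b n. f (b(n := \<not> b n)) \<noteq> f b" using fv by (elim conjE) assumption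
    have fv4: "\<forall>b n. M (f b) (map vseq [0..<n])" using fv by (elim conjE) assumption
    have fv5: "V.independent (range vseq)" using fv by (elim conjE) assumption
    have fv6: "inj vseq" using fv by (elim conjE) assumption
    have fA: "f b \<in> A" for b
    proof -
      obtain \<sigma> where "f b = \<phi> \<sigma>" using fv1 by auto
      then show ?thesis using \<phi>A by auto
    qed
    have flin: "\<And>b. Vector_Spaces.linear sc sc (f b)" using fA linA by simp
    have perf: "perfect_in (linmaps_top sc) (range f)"
    proof (rule perfect_from_cantor[OF flin])
      show "\<exists>k. \<forall>b'\<in>cyl b k. f b' x = f b x" for b x using fv2 by simp
      show "f (b(n := \<not> b n)) \<noteq> f b" for b n using fv3 by simp
    qed
    have PA: "range f \<subseteq> A" using fA by auto
    have inf: "infinite (range vseq)"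
    proof
      assume "finite (range vseq)"
      then have "finite (UNIV :: nat set)" using fv6 finite_imageD by auto
      then show False by simp
    qed
    have "V.span (range vseq) \<supseteq> range vseq" by (rule V.span_superset)
    moreover have "\<forall>T\<in>range f. Q T (V.span (range vseq))"
    proof
      fix T assume "T \<in> range f"
      then obtain b where b: "T = f b" by auto
      show "Q T (V.span (range vseq))" unfolding b by (rule MQ[OF flin]) (use fv4 in simp)
    qed
    moreover have "range f \<noteq> {}" by simp
    moreover have "V.subspace (V.span (range vseq))" by simp
    ultimately show ?thesis using perf PA inf fv5
      by (intro exI[of _ "range f"] exI[of _ "V.span (range vseq)"] conjI exI[of _ "range vseq"]) simp_all
  qed
  from cases show ?thesis
  proof
    assume unc: "uncountable Sfin"
    define M where "M T vs = (\<forall>x\<in>set vs. T x = (0::'e))" for T :: "'e \<Rightarrow> 'e" and vs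
    have exth: "\<exists>v. v \<notin> V.span (set vs) \<and> (\<forall>s\<in>F. M (Tf s) (vs @ [v]))"
      if hyp: "finite F" "F \<noteq> {}" "\<forall>s\<in>F. Tf s \<in> Sfin \<and> M (Tf s) vs" for vs and F :: "bool list set" and Tf
    proof -
      have l: "\<And>s. s \<in> F \<Longrightarrow> Vector_Spaces.linear sc sc (Tf s)" using hyp(3) linA by (auto simp: Sfin_def)
      have fr: "\<And>s. s \<in> F \<Longrightarrow> \<exists>G. finite G \<and> range (Tf s) \<subseteq> V.span G" using hyp(3) by (auto simp: Sfin_def)
      have "\<exists>v. v \<notin> V.span (set vs) \<and> (\<forall>s\<in>F. Tf s v = 0)"
        by (rule V.common_kernel_vec[OF hyp(1) l fr B0 finite_set])
      then obtain v where v: "v \<notin> V.span (set vs)" "\<forall>s\<in>F. Tf s v = 0" by (elim exE conjE) (rule that)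
      show ?thesis using v hyp(3) by (intro exI[of _ v]) (simp add: M_def)
    qed
    have Mnil: "M T []" for T by (simp add: M_def)
    have loc: "M \<tau> vs" if "T \<in> Sfin" "M T vs" "Vector_Spaces.linear sc sc \<tau>" "\<forall>x\<in>set vs. \<tau> x = T x" for T \<tau> vs
      using that by (simp add: M_def)
    have "\<exists>f vseq. (\<forall>b. f b \<in> range \<phi>) \<and> (\<forall>b x. \<exists>k. \<forall>b'\<in>cyl b k. f b' x = f b x) \<and>
     (\<forall>b n. f (b(n := \<not> b n)) \<noteq> f b) \<and> (\<forall>b n. M (f b) (map vseq [0..<n])) \<and>
     V.independent (range vseq) \<and> inj vseq"
      by (rule V.construction[OF cont lin exth loc Mnil unc SA(1)])
    then obtain f vseq where fv: "(\<forall>b. f b \<in> range \<phi>) \<and> (\<forall>b x. \<exists>k. \<forall>b'\<in>cyl b k. f b' x = f b x) \<and>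
     (\<forall>b n. f (b(n := \<not> b n)) \<noteq> f b) \<and> (\<forall>b n. M (f b) (map vseq [0..<n])) \<and>
     V.independent (range vseq) \<and> inj vseq" by (elim exE) (rule that)
    have MQ: "V.span (range vseq) \<subseteq> {x. T x = 0}"
      if l: "Vector_Spaces.linear sc sc T" and m: "\<forall>n. M T (map vseq [0..<n])" for T
    proof
      fix x assume x: "x \<in> V.span (range vseq)"
      interpret L: Vector_Spaces.linear sc sc T by (rule l)
      have "T y = 0" if yr: "y \<in> range vseq" for y
      proof -
        obtain i where "y = vseq i" using yr by auto
        moreover have "M T (map vseq [0..<Suc i])" using m by blast
        ultimately show ?thesis by (simp add: M_def)
      qed
      then show "x \<in> {x. T x = 0}" using L.eq_0_on_span[OF _ x] by simp
    qed
    have "\<exists>P V. P \<noteq> {} \<and> perfect_in (linmaps_top sc) P \<and> P \<subseteq> A \<and>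
           module.subspace sc V \<and> (\<exists>B\<subseteq>V. \<not> module.dependent sc B \<and> infinite B) \<and>
           (\<forall>T\<in>P. V \<subseteq> {x. T x = 0})"
      by (rule final[OF fv, of "\<lambda>T V. V \<subseteq> {x. T x = 0}"]) (rule MQ)
    then obtain P V where h: "P \<noteq> {} \<and> perfect_in (linmaps_top sc) P \<and> P \<subseteq> A \<and>
           module.subspace sc V \<and> (\<exists>B\<subseteq>V. \<not> module.dependent sc B \<and> infinite B) \<and>
           (\<forall>T\<in>P. V \<subseteq> {x. T x = 0})" by (elim exE) (rule that)
    show ?thesis using h by (intro exI[of _ P] exI[of _ V]) simp
  next
    assume unc: "uncountable Sinf"
    define M where "M T vs = inj_on T (V.span (set vs))" for T :: "'e \<Rightarrow> 'e" and vs
    have exth: "\<exists>v. v \<notin> V.span (set vs) \<and> (\<forall>s\<in>F. M (Tf s) (vs @ [v]))"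
      if hyp: "finite F" "F \<noteq> {}" "\<forall>s\<in>F. Tf s \<in> Sinf \<and> M (Tf s) vs" for vs and F :: "bool list set" and Tf
    proof -
      have l: "\<And>s. s \<in> F \<Longrightarrow> Vector_Spaces.linear sc sc (Tf s)" using hyp(3) linA by (auto simp: Sinf_def)
      have ir: "\<And>s G. s \<in> F \<Longrightarrow> finite G \<Longrightarrow> \<not> range (Tf s) \<subseteq> V.span G"
        using hyp(3) by (auto simp: Sinf_def Sfin_def)
      have "\<exists>v. \<forall>s\<in>F. Tf s v \<notin> V.span (Tf s ` set vs)"
      proof -
        have fH: "\<And>s. s \<in> F \<Longrightarrow> finite (Tf s ` set vs)" by simp
        have ir': "\<And>s G. s \<in> F \<Longrightarrow> finite G \<Longrightarrow> \<not> range (Tf s) \<subseteq> V.span G" by (rule ir)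
        show ?thesis
          using V.avoid[where I=F and T=Tf and H="\<lambda>s. Tf s ` set vs", OF hyp(1) l ir' fH] by simp
      qed
      then obtain v where v: "\<forall>s\<in>F. Tf s v \<notin> V.span (Tf s ` set vs)" by (elim exE) (rule that)
      obtain s0 where s0: "s0 \<in> F" using hyp(2) by blast
      have vn: "v \<notin> V.span (set vs)"
      proof
        assume "v \<in> V.span (set vs)"
        interpret L: Vector_Spaces.linear sc sc "Tf s0" by (rule l[OF s0])
        have "Tf s0 v \<in> Tf s0 ` V.span (set vs)" using \<open>v \<in> V.span (set vs)\<close> by simp
        then have "Tf s0 v \<in> V.span (Tf s0 ` set vs)" using L.span_image by simp
        then show False using v s0 by simp
      qed
      have "\<forall>s\<in>F. M (Tf s) (vs @ [v])"
      proof
        fix s assume s: "s \<in> F"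
        have "inj_on (Tf s) (V.span (insert v (set vs)))"
          by (rule V.inj_extend[OF l[OF s]]) (use hyp(3) s v in \<open>auto simp: M_def\<close>)
        then show "M (Tf s) (vs @ [v])" by (simp add: M_def)
      qed
      then show ?thesis using vn by blast
    qed
    have loc: "M \<tau> vs" if TS: "T \<in> Sinf" and m: "M T vs" and lt: "Vector_Spaces.linear sc sc \<tau>" and eq: "\<forall>x\<in>set vs. \<tau> x = T x" for T \<tau> vs
    proof -
      have lT: "Vector_Spaces.linear sc sc T" using TS linA by (simp add: Sinf_def)
      have eqsp: "\<tau> x = T x" if x: "x \<in> V.span (set vs)" for x
        using vector_space_pair.linear_eq_on[OF VP lt lT x] eq by blast
      show ?thesis unfolding M_def
      proof (rule inj_onI)
        fix x y assume x: "x \<in> V.span (set vs)" and y: "y \<in> V.span (set vs)" and e: "\<tau> x = \<tau> y"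
        have "T x = T y" using e eqsp[OF x] eqsp[OF y] by simp
        moreover have "inj_on T (V.span (set vs))" using m by (simp add: M_def)
        ultimately show "x = y" using x y inj_onD by metis
      qed
    qed
    have Mnil: "M T []" for T by (simp add: M_def)
    have "\<exists>f vseq. (\<forall>b. f b \<in> range \<phi>) \<and> (\<forall>b x. \<exists>k. \<forall>b'\<in>cyl b k. f b' x = f b x) \<and>
     (\<forall>b n. f (b(n := \<not> b n)) \<noteq> f b) \<and> (\<forall>b n. M (f b) (map vseq [0..<n])) \<and>
     V.independent (range vseq) \<and> inj vseq"
      by (rule V.construction[OF cont lin exth loc Mnil unc SA(2)])
    then obtain f vseq where fv: "(\<forall>b. f b \<in> range \<phi>) \<and> (\<forall>b x. \<exists>k. \<forall>b'\<in>cyl b k. f b' x = f b x) \<and>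
     (\<forall>b n. f (b(n := \<not> b n)) \<noteq> f b) \<and> (\<forall>b n. M (f b) (map vseq [0..<n])) \<and>
     V.independent (range vseq) \<and> inj vseq" by (elim exE) (rule that)
    have MQ: "inj_on T (V.span (range vseq))"
      if l: "Vector_Spaces.linear sc sc T" and m: "\<forall>n. M T (map vseq [0..<n])" for T
    proof (rule inj_onI)
      fix x y assume x: "x \<in> V.span (range vseq)" and y: "y \<in> V.span (range vseq)" and e: "T x = T y"
      obtain Nx where Nx: "x \<in> V.span (set (map vseq [0..<Nx]))" using V.span_range_prefix[OF x] by blast
      obtain Ny where Ny: "y \<in> V.span (set (map vseq [0..<Ny]))" using V.span_range_prefix[OF y] by blast
      have x': "x \<in> V.span (set (map vseq [0..<max Nx Ny]))" by (rule V.span_prefix_mono[OF _ Nx]) simp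
      have y': "y \<in> V.span (set (map vseq [0..<max Nx Ny]))" by (rule V.span_prefix_mono[OF _ Ny]) simp
      have "inj_on T (V.span (set (map vseq [0..<max Nx Ny])))" using m by (simp add: M_def)
      then show "x = y" using x' y' e inj_onD by metis
    qed
    have "\<exists>P V. P \<noteq> {} \<and> perfect_in (linmaps_top sc) P \<and> P \<subseteq> A \<and>
           module.subspace sc V \<and> (\<exists>B\<subseteq>V. \<not> module.dependent sc B \<and> infinite B) \<and>
           (\<forall>T\<in>P. inj_on T V)"
      by (rule final[OF fv, of "\<lambda>T V. inj_on T V"]) (rule MQ)
    then obtain P V where h: "P \<noteq> {} \<and> perfect_in (linmaps_top sc) P \<and> P \<subseteq> A \<and>
           module.subspace sc V \<and> (\<exists>B\<subseteq>V. \<not> module.dependent sc B \<and> infinite B) \<and>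
           (\<forall>T\<in>P. inj_on T V)" by (elim exE) (rule that)
    show ?thesis using h by (intro exI[of _ P] exI[of _ V]) simp
  qed
qed


end
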